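(* Let $\mathcal{A}\subseteq\mathbb{R}^3$ be measurable with finite positive measure, $k_0,\eta>0$, and for $k\in\{1,2\}$ let $\mathsf{G}_k\in L^2(\mathcal{A})$ with $\mathsf{g}_k=\int_{\mathcal{A}}|\mathsf{G}_k|^2>0$, $\mathsf{H}_k=\frac{\mathrm{j}k_0\eta}{\sqrt{4\pi}}\mathsf{G}_k$, $A_{\mathsf{u},k}>0$, $\sigma_k>0$, and $\hat{\mathsf{H}}_k=\frac{\sqrt{A_{\mathsf{u},k}}}{\sigma_k}\mathsf{H}_k$. Let $\rho=\frac{\int_{\mathcal{A}}\mathsf{G}_1^*\mathsf{G}_2}{\sqrt{\mathsf{g}_1\mathsf{g}_2}}$. Let $\mathsf{P}>0$ and $\mathsf{P}_1,\mathsf{P}_2\ge0$ with $\mathsf{P}_1+\mathsf{P}_2=\mathsf{P}$, and put $\overline{\gamma}_{\mathsf{dl},k}=\frac{A_{\mathsf{u},k}k_0^2\eta^2}{4\pi\sigma_k^2}\mathsf{P}_k$. Define the source currents $$\mathsf{J}_{\mathsf{dl},1}(\mathbf{r})=\sqrt{\mathsf{P}_1}\,\frac{\hat{\mathsf{H}}_1^*(\mathbf{r})-\frac{\mathsf{P}_2\int_{\mathcal{A}}\hat{\mathsf{H}}_1^*\hat{\mathsf{H}}_2}{1+\mathsf{P}_2\int_{\mathcal{A}}|\hat{\mathsf{H}}_2|^2}\hat{\mathsf{H}}_2^*(\mathbf{r})}{\sqrt{\int_{\mathcal{A}}|\hat{\mathsf{H}}_1|^2-\frac{\mathsf{P}_2|\int_{\mathcal{A}}\hat{\mathsf{H}}_1^*\hat{\mathsf{H}}_2|^2}{1+\mathsf{P}_2\int_{\mathcal{A}}|\hat{\mathsf{H}}_2|^2}}},\qquad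 \mathsf{J}_{\mathsf{dl},2}(\mathbf{r})=\sqrt{\mathsf{P}_2}\,\frac{\hat{\mathsf{H}}_2^*(\mathbf{r})\sqrt{1+|\int_{\mathcal{A}}\hat{\mathsf{H}}_2\mathsf{J}_{\mathsf{dl},1}|^2}}{\sqrt{\int_{\mathcal{A}}|\hat{\mathsf{H}}_2|^2}}.$$ Define the downlink rates under dirty-paper coding with order $2\rightarrow1$: $$\mathsf{R}_{\mathsf{dl},1}^{2\rightarrow1}=\log_2\Big(1+\Big|\int_{\mathcal{A}}\hat{\mathsf{H}}_1\mathsf{J}_{\mathsf{dl},1}\Big|^2\Big),\qquad \mathsf{R}_{\mathsf{dl},2}^{2\rightarrow1}=\log_2\Big(1+\frac{|\int_{\mathcal{A}}\hat{\mathsf{H}}_2\mathsf{J}_{\mathsf{dl},2}|^2}{1+|\int_{\mathcal{A}}\hat{\mathsf{H}}_2\mathsf{J}_{\mathsf{dl},1}|^2}\Big).$$ Then $$\mathsf{R}_{\mathsf{dl},1}^{2\rightarrow1}=\log_2\!\Big(1+\overline{\gamma}_{\mathsf{dl},1}\mathsf{g}_1\Big(1-\tfrac{\overline{\gamma}_{\mathsf{dl},2}\mathsf{g}_2|\rho|^2}{1+\overline{\gamma}_{\mathsf{dl},2}\mathsf{g}_2}\Big)\Big),\qquad \mathsf{R}_{\mathsf{dl},2}^{2\rightarrow1}=\log_2(1+\overline{\gamma}_{\mathsf{dl},2}\mathsf{g}_2),$$ so that $\mathsf{R}_{\mathsf{dl},1}^{2\rightarrow1}+\mathsf{R}_{\mathsf{dl},2}^{2\rightarrow1}=\log_2(1+\overline{\gamma}_{\mathsf{dl},1}\mathsf{g}_1+\overline{\gamma}_{\mathsf{dl},2}\mathsf{g}_2+\overline{\gamma}_{\mathsf{dl},1}\overline{\gamma}_{\mathsf{dl},2}\mathsf{g}_1\mathsf{g}_2(1-|\rho|^2))$,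 and moreover $$\sum_{k=1}^2\int_{\mathcal{A}}|\mathsf{J}_{\mathsf{dl},k}(\mathbf{r})|^2\mathrm{d}\mathbf{r}=\mathsf{P}_1+\mathsf{P}_2=\mathsf{P}.$$
   Context: Integrals without variable are over $\mathbf{r}\in\mathcal{A}$ with respect to Lebesgue measure. In the paper $\mathcal{A}$ is the base-station continuous aperture, $\mathsf{G}_k(\mathbf{r})=\frac{e^{-\mathrm{j}k_0\|\mathbf{r}-\mathbf{s}_k\|}}{\sqrt{4\pi}\|\mathbf{r}-\mathbf{s}_k\|}\sqrt{\frac{|\mathbf{e}^{\mathsf{T}}(\mathbf{s}_k-\mathbf{r})|}{\|\mathbf{r}-\mathbf{s}_k\|}}$ (user locations $\mathbf{s}_k\notin\overline{\mathcal{A}}$, aperture normal $\mathbf{e}$), $A_{\mathsf{u},k}$ is user $k$'s aperture size, $\sigma_k^2$ its noise intensity, and $(\mathsf{P}_1,\mathsf{P}_2)$ is a power allocation of the dual uplink channel (the downlink sum-rate capacity is attained when it is the optimal dual allocation). *)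

theory Defs
  imports "HOL-Analysis.Analysis"
begin

definition L2_on :: "(real^3) set \<Rightarrow> (real^3 \<Rightarrow> complex) \<Rightarrow> bool" where
  "L2_on A f \<longleftrightarrow> f \<in> borel_measurable (lebesgue_on A) \<and>
     integrable (lebesgue_on A) (\<lambda>r. (cmod (f r))\<^sup>2)"

definition cint :: "(real^3) set \<Rightarrow> (real^3 \<Rightarrow> complex) \<Rightarrow> complex" where
  "cint A f = integral\<^sup>L (lebesgue_on A) f"

definition rint :: "(real^3) set \<Rightarrow> (real^3 \<Rightarrow> real) \<Rightarrow> real" where
  "rint A f = integral\<^sup>L (lebesgue_on A) f"

end

theory Submission
  imports Defs
begin

definition L2 :: "'a measure \<Rightarrow> ('a \<Rightarrow> complex) \<Rightarrow> bool" where
  "L2 M u \<longleftrightarrow> u \<in> borel_measurable M \<and> integrable M (\<lambda>x. (cmod (u x))\<^sup>2)"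

lemma L2_prod:
  assumes "L2 M u" "L2 M v"
  shows "integrable M (\<lambda>x. u x * v x)"
proof (rule Bochner_Integration.integrable_bound)
  show "integrable M (\<lambda>x. (cmod (u x))\<^sup>2 + (cmod (v x))\<^sup>2)"
    using assms unfolding L2_def by auto
  show "(\<lambda>x. u x * v x) \<in> borel_measurable M" using assms unfolding L2_def by auto
  show "AE x in M. norm (u x * v x) \<le> norm ((cmod (u x))\<^sup>2 + (cmod (v x))\<^sup>2)"
  proof (rule AE_I2)
    fix x
    have "cmod (u x) * cmod (v x) \<le> (cmod (u x))\<^sup>2 + (cmod (v x))\<^sup>2"
    proof -
      have "0 \<le> (cmod (u x) - cmod (v x))\<^sup>2" by simp
      moreover have "0 \<le> cmod (u x) * cmod (v x)" by simp
      ultimately have "2 * (cmod (u x) * cmod (v x)) \<le> (cmod (u x))\<^sup>2 + (cmod (v x))\<^sup>2"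
        by (simp add: power2_eq_square algebra_simps)
      with \<open>0 \<le> cmod (u x) * cmod (v x)\<close> show ?thesis by linarith
    qed
    then show "norm (u x * v x) \<le> norm ((cmod (u x))\<^sup>2 + (cmod (v x))\<^sup>2)"
      by (simp add: norm_mult)
  qed
qed

lemma L2_cnj: "L2 M u \<Longrightarrow> L2 M (\<lambda>x. cnj (u x))"
  unfolding L2_def by (auto intro: borel_measurable_continuous_on continuous_intros)

lemma L2_scale: "L2 M u \<Longrightarrow> L2 M (\<lambda>x. c * u x)"
  unfolding L2_def by (auto simp: norm_mult power_mult_distrib)

lemma nsq_scale: "integral\<^sup>L M (\<lambda>x. (cmod (c * u x))\<^sup>2) = (cmod c)\<^sup>2 * integral\<^sup>L M (\<lambda>x. (cmod (u x))\<^sup>2)"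
  by (simp add: norm_mult power_mult_distrib)

lemma nsq_complex: "complex_of_real (integral\<^sup>L M (\<lambda>x. (cmod (u x))\<^sup>2)) = integral\<^sup>L M (\<lambda>x. u x * cnj (u x))"
proof -
  have "(\<lambda>x. complex_of_real ((cmod (u x))\<^sup>2)) = (\<lambda>x. u x * cnj (u x))"
    by (intro ext) (metis complex_norm_square)
  then show ?thesis by (metis integral_complex_of_real)
qed

lemma lin_int:
  assumes "L2 M u" "L2 M v" "L2 M w"
  shows "integral\<^sup>L M (\<lambda>x. w x * (a * u x + b * v x)) = a * integral\<^sup>L M (\<lambda>x. w x * u x) + b * integral\<^sup>L M (\<lambda>x. w x * v x)"
proof -
  have "(\<lambda>x. w x * (a * u x + b * v x)) = (\<lambda>x. a * (w x * u x) + b * (w x * v x))"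
    by (auto simp: algebra_simps)
  then show ?thesis
    using L2_prod[OF assms(3,1)] L2_prod[OF assms(3,2)]
    by (simp add: Bochner_Integration.integral_add)
qed

lemma nsq_expand:
  assumes "L2 M u" "L2 M v"
  shows "complex_of_real (integral\<^sup>L M (\<lambda>x. (cmod (a * u x + b * v x))\<^sup>2)) =
     a * cnj a * complex_of_real (integral\<^sup>L M (\<lambda>x. (cmod (u x))\<^sup>2))
   + b * cnj b * complex_of_real (integral\<^sup>L M (\<lambda>x. (cmod (v x))\<^sup>2))
   + a * cnj b * integral\<^sup>L M (\<lambda>x. u x * cnj (v x))
   + cnj a * b * cnj (integral\<^sup>L M (\<lambda>x. u x * cnj (v x)))"
proof -
  have i1: "integrable M (\<lambda>x. u x * cnj (u x))" "integrable M (\<lambda>x. v x * cnj (v x))"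
     "integrable M (\<lambda>x. u x * cnj (v x))" "integrable M (\<lambda>x. v x * cnj (u x))"
    using assms L2_prod L2_cnj by blast+
  have e: "(\<lambda>x. (a * u x + b * v x) * cnj (a * u x + b * v x)) =
     (\<lambda>x. (a * cnj a) * (u x * cnj (u x)) + (b * cnj b) * (v x * cnj (v x))
        + ((a * cnj b) * (u x * cnj (v x)) + (cnj a * b) * (v x * cnj (u x))))"
    by (auto simp: algebra_simps)
  have c: "integral\<^sup>L M (\<lambda>x. v x * cnj (u x)) = cnj (integral\<^sup>L M (\<lambda>x. u x * cnj (v x)))"
  proof -
    have "(\<lambda>x. v x * cnj (u x)) = (\<lambda>x. cnj (u x * cnj (v x)))" by auto
    then show ?thesis by (simp only: Bochner_Integration.integral_cnj)
  qed
  show ?thesis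
    unfolding nsq_complex e
    using i1 c by (simp add: Bochner_Integration.integral_add)
qed

lemma CS:
  assumes "L2 M u" "L2 M v" "integral\<^sup>L M (\<lambda>x. (cmod (v x))\<^sup>2) > 0"
  shows "(cmod (integral\<^sup>L M (\<lambda>x. cnj (u x) * v x)))\<^sup>2 \<le>
     integral\<^sup>L M (\<lambda>x. (cmod (u x))\<^sup>2) * integral\<^sup>L M (\<lambda>x. (cmod (v x))\<^sup>2)"
proof -
  define Nu where "Nu = integral\<^sup>L M (\<lambda>x. (cmod (u x))\<^sup>2)"
  define Nv where "Nv = integral\<^sup>L M (\<lambda>x. (cmod (v x))\<^sup>2)"
  define q where "q = integral\<^sup>L M (\<lambda>x. u x * cnj (v x))"
  have q': "integral\<^sup>L M (\<lambda>x. cnj (u x) * v x) = cnj q"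
  proof -
    have "(\<lambda>x. cnj (u x) * v x) = (\<lambda>x. cnj (u x * cnj (v x)))" by auto
    then show ?thesis unfolding q_def by (simp only: Bochner_Integration.integral_cnj)
  qed
  have nn: "0 \<le> integral\<^sup>L M (\<lambda>x. (cmod (complex_of_real Nv * u x + (- q) * v x))\<^sup>2)"
    by (rule Bochner_Integration.integral_nonneg) auto
  have "complex_of_real (integral\<^sup>L M (\<lambda>x. (cmod (complex_of_real Nv * u x + (- q) * v x))\<^sup>2))
     = complex_of_real (Nv * (Nv * Nu - (cmod q)\<^sup>2))"
    unfolding nsq_expand[OF assms(1,2)] Nu_def[symmetric] Nv_def[symmetric] q_def[symmetric]
    using complex_norm_square[of q] by (simp add: algebra_simps power2_eq_square)
  with nn have "0 \<le> Nv * (Nv * Nu - (cmod q)\<^sup>2)" by (metis of_real_eq_iff)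
  with assms(3) have "(cmod q)\<^sup>2 \<le> Nu * Nv" unfolding Nv_def
    by (simp add: zero_le_mult_iff algebra_simps)
  then show ?thesis using q' Nu_def Nv_def by simp
qed

lemma gen4:
  fixes P1 P2 h1 h2 zz D e :: real
  assumes e: "e = 1 + P2 * h2" and e0: "e \<noteq> 0" and D: "D = h1 - P2 * zz / e" and D0: "D \<noteq> 0"
  shows "P1 / D * (h1 + (P2 / e)\<^sup>2 * zz * h2 - 2 * (P2 / e) * zz) + P2 * (1 + P1 * zz / (D * e\<^sup>2)) = P1 + P2"
proof -
  have A: "h1 + (P2 / e)\<^sup>2 * zz * h2 - 2 * (P2 / e) * zz = D - P2 * zz / e\<^sup>2"
  proof -
    have ph: "P2 * h2 = e - 1" using e by simp
    have "(P2 / e)\<^sup>2 * zz * h2 = P2 * zz * (P2 * h2) / e\<^sup>2" by (simp add: power2_eq_square)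
    also have "\<dots> = P2 * zz * (e - 1) / e\<^sup>2" unfolding ph ..
    finally have q: "(P2 / e)\<^sup>2 * zz * h2 = P2 * zz * (e - 1) / e\<^sup>2" .
    show ?thesis unfolding q D using e0 by (simp add: field_simps power2_eq_square)
  qed
  have "P1 / D * (D - P2 * zz / e\<^sup>2) + P2 * (1 + P1 * zz / (D * e\<^sup>2)) = P1 + P2"
    using D0 e0 by (simp add: field_simps)
  then show ?thesis unfolding A .
qed

theorem theorem3:
  fixes A :: "(real^3) set"
    and k0 eta Au1 Au2 sigma1 sigma2 P P1 P2 :: real
    and G1 G2 H1 H2 Hh1 Hh2 J1 J2 :: "real^3 \<Rightarrow> complex"
    and g1 g2 \<gamma>1 \<gamma>2 R1 R2 :: real and \<rho> :: complex
  assumes A_meas: "A \<in> sets lebesgue"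
    and A_pos: "0 < emeasure lebesgue A" and A_fin: "emeasure lebesgue A < \<infinity>"
    and k0_pos: "k0 > 0" and eta_pos: "eta > 0"
    and G1_L2: "L2_on A G1" and G2_L2: "L2_on A G2"
    and g1_pos: "g1 > 0"
    and g2_pos: "g2 > 0"
    and Au1_pos: "Au1 > 0" and Au2_pos: "Au2 > 0"
    and sigma1_pos: "sigma1 > 0" and sigma2_pos: "sigma2 > 0"
    and P_pos: "P > 0" and P1_nn: "P1 \<ge> 0" and P2_nn: "P2 \<ge> 0" and P_sum: "P1 + P2 = P"
    and g1_def: "g1 = rint A (\<lambda>r. (cmod (G1 r))\<^sup>2)"
    and g2_def: "g2 = rint A (\<lambda>r. (cmod (G2 r))\<^sup>2)"
    and H1_def: "H1 = (\<lambda>r. \<i> * complex_of_real (k0 * eta / sqrt (4 * pi)) * G1 r)"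
    and H2_def: "H2 = (\<lambda>r. \<i> * complex_of_real (k0 * eta / sqrt (4 * pi)) * G2 r)"
    and Hh1_def: "Hh1 = (\<lambda>r. complex_of_real (sqrt Au1 / sigma1) * H1 r)"
    and Hh2_def: "Hh2 = (\<lambda>r. complex_of_real (sqrt Au2 / sigma2) * H2 r)"
    and rho_def: "\<rho> = cint A (\<lambda>r. cnj (G1 r) * G2 r) / complex_of_real (sqrt (g1 * g2))"
    and gamma1_def: "\<gamma>1 = Au1 * k0\<^sup>2 * eta\<^sup>2 / (4 * pi * sigma1\<^sup>2) * P1"
    and gamma2_def: "\<gamma>2 = Au2 * k0\<^sup>2 * eta\<^sup>2 / (4 * pi * sigma2\<^sup>2) * P2"
    and J1_def: "J1 = (\<lambda>r. complex_of_real (sqrt P1) *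
          (cnj (Hh1 r) - (complex_of_real P2 * cint A (\<lambda>s. cnj (Hh1 s) * Hh2 s)) /
              complex_of_real (1 + P2 * rint A (\<lambda>s. (cmod (Hh2 s))\<^sup>2)) * cnj (Hh2 r)) /
          complex_of_real (sqrt (rint A (\<lambda>s. (cmod (Hh1 s))\<^sup>2)
              - P2 * (cmod (cint A (\<lambda>s. cnj (Hh1 s) * Hh2 s)))\<^sup>2
                / (1 + P2 * rint A (\<lambda>s. (cmod (Hh2 s))\<^sup>2)))))"
    and J2_def: "J2 = (\<lambda>r. complex_of_real (sqrt P2) *
          (cnj (Hh2 r) * complex_of_real (sqrt (1 + (cmod (cint A (\<lambda>s. Hh2 s * J1 s)))\<^sup>2))) /
          complex_of_real (sqrt (rint A (\<lambda>s. (cmod (Hh2 s))\<^sup>2))))"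
    and R1_def: "R1 = log 2 (1 + (cmod (cint A (\<lambda>s. Hh1 s * J1 s)))\<^sup>2)"
    and R2_def: "R2 = log 2 (1 + (cmod (cint A (\<lambda>s. Hh2 s * J2 s)))\<^sup>2
                     / (1 + (cmod (cint A (\<lambda>s. Hh2 s * J1 s)))\<^sup>2))"
  shows "R1 = log 2 (1 + \<gamma>1 * g1 * (1 - \<gamma>2 * g2 * (cmod \<rho>)\<^sup>2 / (1 + \<gamma>2 * g2))) \<and>
         R2 = log 2 (1 + \<gamma>2 * g2) \<and>
         R1 + R2 = log 2 (1 + \<gamma>1 * g1 + \<gamma>2 * g2 + \<gamma>1 * \<gamma>2 * g1 * g2 * (1 - (cmod \<rho>)\<^sup>2)) \<and>
         rint A (\<lambda>r. (cmod (J1 r))\<^sup>2) + rint A (\<lambda>r. (cmod (J2 r))\<^sup>2) = P1 + P2 \<and>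
         P1 + P2 = P"
  proof -
  let ?M = "lebesgue_on A"
  have cintM: "\<And>f. cint A f = integral\<^sup>L ?M f" by (simp add: cint_def)
  have rintM: "\<And>f. rint A f = integral\<^sup>L ?M f" by (simp add: rint_def)
  have LG1: "L2 ?M G1" using G1_L2 by (simp add: L2_on_def L2_def)
  have LG2: "L2 ?M G2" using G2_L2 by (simp add: L2_on_def L2_def)
  define c where "c = k0 * eta / sqrt (4 * pi)"
  define s1 where "s1 = sqrt Au1 / sigma1 * c"
  define s2 where "s2 = sqrt Au2 / sigma2 * c"
  have c_pos: "c > 0" unfolding c_def using k0_pos eta_pos by simp
  have s1_pos: "s1 > 0" unfolding s1_def using c_pos Au1_pos sigma1_pos by simp
  have s2_pos: "s2 > 0" unfolding s2_def using c_pos Au2_pos sigma2_pos by simp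
  have sq4: "(sqrt (4 * pi))\<^sup>2 = 4 * pi" using pi_gt_zero by simp
  have s1sq: "s1\<^sup>2 = Au1 * k0\<^sup>2 * eta\<^sup>2 / (4 * pi * sigma1\<^sup>2)"
    unfolding s1_def c_def using Au1_pos sq4 by (simp add: power_divide power_mult_distrib mult_ac)
  have s2sq: "s2\<^sup>2 = Au2 * k0\<^sup>2 * eta\<^sup>2 / (4 * pi * sigma2\<^sup>2)"
    unfolding s2_def c_def using Au2_pos sq4 by (simp add: power_divide power_mult_distrib mult_ac)
  have gam1: "\<gamma>1 = s1\<^sup>2 * P1" using gamma1_def s1sq by simp
  have gam2: "\<gamma>2 = s2\<^sup>2 * P2" using gamma2_def s2sq by simp
  have Hh1e: "Hh1 = (\<lambda>r. (\<i> * complex_of_real s1) * G1 r)"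
    unfolding Hh1_def H1_def s1_def c_def by (auto simp: algebra_simps)
  have Hh2e: "Hh2 = (\<lambda>r. (\<i> * complex_of_real s2) * G2 r)"
    unfolding Hh2_def H2_def s2_def c_def by (auto simp: algebra_simps)
  have L1: "L2 ?M Hh1" unfolding Hh1e by (rule L2_scale[OF LG1])
  have L2': "L2 ?M Hh2" unfolding Hh2e by (rule L2_scale[OF LG2])
  have cL1: "L2 ?M (\<lambda>r. cnj (Hh1 r))" by (rule L2_cnj[OF L1])
  have cL2: "L2 ?M (\<lambda>r. cnj (Hh2 r))" by (rule L2_cnj[OF L2'])
  define h1 where "h1 = rint A (\<lambda>s. (cmod (Hh1 s))\<^sup>2)"
  define h2 where "h2 = rint A (\<lambda>s. (cmod (Hh2 s))\<^sup>2)"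
  have h1e: "h1 = s1\<^sup>2 * g1" unfolding h1_def g1_def rintM Hh1e nsq_scale
    by (simp add: norm_mult)
  have h2e: "h2 = s2\<^sup>2 * g2" unfolding h2_def g2_def rintM Hh2e nsq_scale
    by (simp add: norm_mult)
  have h1_pos: "h1 > 0" using h1e s1_pos g1_pos by simp
  have h2_pos: "h2 > 0" using h2e s2_pos g2_pos by simp
  define p where "p = cint A (\<lambda>r. cnj (G1 r) * G2 r)"
  define z where "z = cint A (\<lambda>s. cnj (Hh1 s) * Hh2 s)"
  have ze: "z = complex_of_real (s1 * s2) * p"
  proof -
    have "(\<lambda>s. cnj (Hh1 s) * Hh2 s) = (\<lambda>s. complex_of_real (s1 * s2) * (cnj (G1 s) * G2 s))"
      unfolding Hh1e Hh2e by (auto simp: algebra_simps)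
    then show ?thesis unfolding z_def p_def cintM by simp
  qed
  define zz where "zz = (cmod z)\<^sup>2"
  have zze: "zz = s1\<^sup>2 * s2\<^sup>2 * (cmod p)\<^sup>2"
    unfolding zz_def ze using s1_pos s2_pos by (simp add: norm_mult power_mult_distrib abs_mult)
  have CSp: "(cmod p)\<^sup>2 \<le> g1 * g2"
    unfolding p_def cintM g1_def g2_def rintM
    by (rule CS[OF LG1 LG2]) (use g2_pos g2_def rintM in simp)
  have zz_le: "zz \<le> h1 * h2"
  proof -
    have "s1\<^sup>2 * s2\<^sup>2 * (cmod p)\<^sup>2 \<le> s1\<^sup>2 * s2\<^sup>2 * (g1 * g2)"
      using CSp by (intro mult_left_mono) auto
    then show ?thesis unfolding zze h1e h2e by (simp add: algebra_simps)
  qed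
  have zz_nn: "zz \<ge> 0" unfolding zz_def by simp
  have zc: "z * cnj z = complex_of_real zz" unfolding zz_def by (metis complex_norm_square)
  have rho2: "(cmod \<rho>)\<^sup>2 = (cmod p)\<^sup>2 / (g1 * g2)"
    unfolding rho_def p_def[symmetric] using g1_pos g2_pos
    by (simp add: norm_divide power_divide)
  define t where "t = P2 / (1 + P2 * h2)"
  define D where "D = h1 - P2 * zz / (1 + P2 * h2)"
  have den_pos: "1 + P2 * h2 > 0" using P2_nn h2_pos by (simp add: add_pos_nonneg)
  have D_pos: "D > 0"
  proof -
    have "D * (1 + P2 * h2) = h1 * (1 + P2 * h2) - P2 * zz"
      unfolding D_def using den_pos by (simp add: field_simps)
    also have "\<dots> \<ge> h1"
    proof -
      have "P2 * zz \<le> P2 * (h1 * h2)" by (rule mult_left_mono[OF zz_le P2_nn])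
      then show ?thesis by (simp add: algebra_simps)
    qed
    finally have "D * (1 + P2 * h2) > 0" using h1_pos by simp
    then show ?thesis using den_pos by (simp add: zero_less_mult_iff)
  qed
  define \<kappa> where "\<kappa> = sqrt P1 / sqrt D"
  have J1e: "J1 = (\<lambda>r. complex_of_real \<kappa> * cnj (Hh1 r) + (- (complex_of_real \<kappa> * (complex_of_real t * z))) * cnj (Hh2 r))"
  proof -
    have n1: "complex_of_real (sqrt D) \<noteq> 0" using D_pos by simp
    have n2: "complex_of_real (1 + P2 * h2) \<noteq> 0" using den_pos by (simp only: of_real_eq_0_iff)
    have gen: "\<And>a x p zz0 e y d::complex. d \<noteq> 0 \<Longrightarrow> e \<noteq> 0 \<Longrightarrow>
       a * (x - p * zz0 / e * y) / d = (a / d) * x + (- (a / d * (p / e * zz0))) * y"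
      by (simp add: field_simps)
    show ?thesis
      unfolding J1_def h1_def[symmetric] h2_def[symmetric] z_def[symmetric] zz_def[symmetric] D_def[symmetric]
      apply (rule ext)
      apply (subst gen[OF n1 n2])
      apply (simp add: \<kappa>_def t_def)
      done
  qed
  have ipz: "integral\<^sup>L ?M (\<lambda>r. Hh1 r * cnj (Hh2 r)) = cnj z"
  proof -
    have "(\<lambda>r. Hh1 r * cnj (Hh2 r)) = (\<lambda>r. cnj (cnj (Hh1 r) * Hh2 r))" by auto
    then show ?thesis unfolding z_def cintM by (simp only: Bochner_Integration.integral_cnj)
  qed
  have ipz2: "integral\<^sup>L ?M (\<lambda>r. Hh2 r * cnj (Hh1 r)) = z"
    unfolding z_def cintM by (simp add: mult.commute)
  have ip11: "integral\<^sup>L ?M (\<lambda>r. Hh1 r * cnj (Hh1 r)) = complex_of_real h1"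
    unfolding h1_def rintM by (simp add: nsq_complex)
  have ip22: "integral\<^sup>L ?M (\<lambda>r. Hh2 r * cnj (Hh2 r)) = complex_of_real h2"
    unfolding h2_def rintM by (simp add: nsq_complex)
  have sqD: "(sqrt D)\<^sup>2 = D" using D_pos by simp
  have sqP1: "(sqrt P1)\<^sup>2 = P1" using P1_nn by simp
  have sqP2: "(sqrt P2)\<^sup>2 = P2" using P2_nn by simp
  have k2: "\<kappa>\<^sup>2 = P1 / D" unfolding \<kappa>_def by (simp add: power_divide sqD sqP1)
  have I1: "cint A (\<lambda>s. Hh1 s * J1 s) = complex_of_real (\<kappa> * D)"
  proof -
    have "cint A (\<lambda>s. Hh1 s * J1 s) = complex_of_real \<kappa> * complex_of_real h1
        - complex_of_real \<kappa> * complex_of_real t * (z * cnj z)"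
      unfolding cintM J1e lin_int[OF cL1 cL2 L1] ipz ip11 by (simp add: algebra_simps)
    also have "\<dots> = complex_of_real (\<kappa> * D)"
      unfolding zc D_def t_def by (simp add: field_simps)
    finally show ?thesis .
  qed
  have Q1: "(cmod (cint A (\<lambda>s. Hh1 s * J1 s)))\<^sup>2 = P1 * D"
  proof -
    have "(\<kappa> * D)\<^sup>2 = \<kappa>\<^sup>2 * D * D" by (simp add: power2_eq_square)
    also have "\<dots> = P1 * D" using k2 D_pos by simp
    finally show ?thesis unfolding I1 norm_of_real by simp
  qed
  define Q where "Q = (cmod (cint A (\<lambda>s. Hh2 s * J1 s)))\<^sup>2"
  have I2: "cint A (\<lambda>s. Hh2 s * J1 s) = complex_of_real (\<kappa> / (1 + P2 * h2)) * z"
  proof -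
    have "cint A (\<lambda>s. Hh2 s * J1 s) = complex_of_real \<kappa> * z
        - complex_of_real \<kappa> * complex_of_real t * z * complex_of_real h2"
      unfolding cintM J1e lin_int[OF cL1 cL2 L2'] ipz2 ip22 by (simp add: algebra_simps)
    also have "\<dots> = complex_of_real (\<kappa> - \<kappa> * t * h2) * z"
      by (simp add: algebra_simps)
    also have "\<kappa> - \<kappa> * t * h2 = \<kappa> / (1 + P2 * h2)"
      unfolding t_def using den_pos by (simp add: field_simps)
    finally show ?thesis .
  qed
  have Qe: "Q = P1 * zz / (D * (1 + P2 * h2)\<^sup>2)"
    unfolding Q_def I2 norm_mult norm_of_real zz_def using den_pos
    by (simp add: power_mult_distrib power_divide k2)
  have Q_nn: "Q \<ge> 0" unfolding Q_def by simp
  define \<mu> where "\<mu> = sqrt P2 * sqrt (1 + Q) / sqrt h2"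
  have J2e: "J2 = (\<lambda>r. complex_of_real \<mu> * cnj (Hh2 r) + 0 * cnj (Hh1 r))"
    unfolding J2_def \<mu>_def Q_def h2_def by (auto simp: field_simps)
  have mu2: "\<mu>\<^sup>2 = P2 * (1 + Q) / h2"
    unfolding \<mu>_def using Q_nn h2_pos by (simp add: power_divide power_mult_distrib sqP2)
  have I3: "cint A (\<lambda>s. Hh2 s * J2 s) = complex_of_real (\<mu> * h2)"
    unfolding cintM J2e lin_int[OF cL2 cL1 L2'] ip22 by simp
  have Q3: "(cmod (cint A (\<lambda>s. Hh2 s * J2 s)))\<^sup>2 = P2 * h2 * (1 + Q)"
  proof -
    have "(\<mu> * h2)\<^sup>2 = \<mu>\<^sup>2 * h2 * h2" by (simp add: power2_eq_square)
    also have "\<dots> = P2 * h2 * (1 + Q)" using mu2 h2_pos by simp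
    finally show ?thesis unfolding I3 norm_of_real by simp
  qed
  have R2e: "R2 = log 2 (1 + P2 * h2)"
    unfolding R2_def Q3 Q_def[symmetric] using Q_nn by simp
  have R1e: "R1 = log 2 (1 + P1 * D)"
    unfolding R1_def Q1 by simp
  have g2e: "\<gamma>2 * g2 = P2 * h2" unfolding gam2 h2e by simp
  have g1e: "\<gamma>1 * g1 = P1 * h1" unfolding gam1 h1e by simp
  have rY: "\<gamma>2 * g2 * (cmod \<rho>)\<^sup>2 = P2 * s2\<^sup>2 * (cmod p)\<^sup>2 / g1"
  proof -
    have "\<gamma>2 * g2 * (cmod \<rho>)\<^sup>2 = P2 * (s2\<^sup>2 * g2) * ((cmod p)\<^sup>2 / (g1 * g2))"
      unfolding gam2 rho2 by (simp add: mult_ac)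
    then show ?thesis using g1_pos g2_pos by (simp add: field_simps)
  qed
  have r1: "\<gamma>1 * g1 * (1 - \<gamma>2 * g2 * (cmod \<rho>)\<^sup>2 / (1 + \<gamma>2 * g2)) = P1 * D"
  proof -
    have gen2: "\<And>a h w e::real. a * h * (1 - w / e) = a * h - a * (h * w) / e"
      by (case_tac "e = 0") (simp_all add: field_simps)
    have "\<gamma>1 * g1 * (1 - \<gamma>2 * g2 * (cmod \<rho>)\<^sup>2 / (1 + \<gamma>2 * g2))
        = P1 * h1 * (1 - P2 * s2\<^sup>2 * (cmod p)\<^sup>2 / g1 / (1 + P2 * h2))"
      by (subst rY, subst g2e, subst g1e, rule refl)
    also have "\<dots> = P1 * h1 - P1 * (h1 * (P2 * s2\<^sup>2 * (cmod p)\<^sup>2 / g1)) / (1 + P2 * h2)"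
      by (rule gen2)
    also have "h1 * (P2 * s2\<^sup>2 * (cmod p)\<^sup>2 / g1) = P2 * zz"
      unfolding zze h1e using g1_pos by (simp add: field_simps)
    also have "P1 * h1 - P1 * (P2 * zz) / (1 + P2 * h2) = P1 * D"
      unfolding D_def by (simp add: algebra_simps)
    finally show ?thesis .
  qed
  have part1: "R1 = log 2 (1 + \<gamma>1 * g1 * (1 - \<gamma>2 * g2 * (cmod \<rho>)\<^sup>2 / (1 + \<gamma>2 * g2)))"
    unfolding R1e r1 ..
  have part2: "R2 = log 2 (1 + \<gamma>2 * g2)" unfolding R2e g2e ..
  have PD_nn: "P1 * D \<ge> 0" using P1_nn D_pos by simp
  have part3: "R1 + R2 = log 2 (1 + \<gamma>1 * g1 + \<gamma>2 * g2 + \<gamma>1 * \<gamma>2 * g1 * g2 * (1 - (cmod \<rho>)\<^sup>2))"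
  proof -
    have "R1 + R2 = log 2 ((1 + P1 * D) * (1 + P2 * h2))"
      unfolding R1e R2e using PD_nn den_pos by (simp add: log_mult)
    also have "(1 + P1 * D) * (1 + P2 * h2) = 1 + \<gamma>1 * g1 + \<gamma>2 * g2 + \<gamma>1 * \<gamma>2 * g1 * g2 * (1 - (cmod \<rho>)\<^sup>2)"
    proof -
      have gen: "\<And>G X r::real. 1 + X > 0 \<Longrightarrow> (1 + G * (1 - X * r / (1 + X))) * (1 + X) = 1 + G + X + G * X * (1 - r)"
        by (simp add: field_simps)
      have "(1 + P1 * D) * (1 + P2 * h2) = (1 + \<gamma>1 * g1 * (1 - \<gamma>2 * g2 * (cmod \<rho>)\<^sup>2 / (1 + \<gamma>2 * g2))) * (1 + \<gamma>2 * g2)"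
        unfolding r1[symmetric] g2e ..
      also have "\<dots> = 1 + \<gamma>1 * g1 + \<gamma>2 * g2 + \<gamma>1 * g1 * (\<gamma>2 * g2) * (1 - (cmod \<rho>)\<^sup>2)"
        by (rule gen) (use den_pos g2e in simp)
      finally show ?thesis by (simp add: mult_ac)
    qed
    finally show ?thesis .
  qed
  have N1: "rint A (\<lambda>r. (cmod (J1 r))\<^sup>2) = P1 / D * (h1 + t\<^sup>2 * zz * h2 - 2 * t * zz)"
  proof -
    have n1: "integral\<^sup>L ?M (\<lambda>r. (cmod (cnj (Hh1 r)))\<^sup>2) = h1" unfolding h1_def rintM by simp
    have n2: "integral\<^sup>L ?M (\<lambda>r. (cmod (cnj (Hh2 r)))\<^sup>2) = h2" unfolding h2_def rintM by simp
    have n3: "integral\<^sup>L ?M (\<lambda>r. cnj (Hh1 r) * cnj (cnj (Hh2 r))) = z" unfolding z_def cintM by simp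
    have "complex_of_real (rint A (\<lambda>r. (cmod (J1 r))\<^sup>2)) =
       complex_of_real (\<kappa>\<^sup>2) * complex_of_real h1 + complex_of_real (\<kappa>\<^sup>2) * complex_of_real t * complex_of_real t * (z * cnj z) * complex_of_real h2
       - complex_of_real (\<kappa>\<^sup>2) * complex_of_real t * (z * cnj z) - complex_of_real (\<kappa>\<^sup>2) * complex_of_real t * (z * cnj z)"
      unfolding rintM J1e nsq_expand[OF cL1 cL2] n1 n2 n3
      by (simp add: algebra_simps power2_eq_square)
    also have "\<dots> = complex_of_real (P1 / D * (h1 + t\<^sup>2 * zz * h2 - 2 * t * zz))"
      unfolding zc k2 by (simp add: algebra_simps power2_eq_square)
    finally show ?thesis by (metis of_real_eq_iff)
  qed
  have N2: "rint A (\<lambda>r. (cmod (J2 r))\<^sup>2) = P2 * (1 + Q)"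
  proof -
    have "rint A (\<lambda>r. (cmod (J2 r))\<^sup>2) = \<mu>\<^sup>2 * h2"
      unfolding rintM J2e h2_def by (simp add: norm_mult power_mult_distrib)
    then show ?thesis unfolding mu2 using h2_pos by simp
  qed
  have part4: "rint A (\<lambda>r. (cmod (J1 r))\<^sup>2) + rint A (\<lambda>r. (cmod (J2 r))\<^sup>2) = P1 + P2"
    unfolding N1 N2 Qe t_def
    by (rule gen4) (use den_pos D_pos D_def in auto)
  show ?thesis using part1 part2 part3 part4 P_sum by simp
qed

end
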